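(* Let $S\subseteq\{0,1\}^n$, $1\le m\le n$, $f\in[0,1/2]$, $\Delta\in(0,1)$. Suppose $T\ge 24\ln\frac1\Delta$ hash functions $h_1,\dots,h_T$ are drawn independently from $\mathcal{H}^f_{m\times n}$. Let $$U(n,m,f)=\min\left\{z\ \middle|\ \frac{1}{1+2^{2m}v(z)/z^2}\ge\frac34\right\}.$$ Let $\mathcal{A}(S,h_1,\dots,h_T)$ be the random variable equal to $U(n,m,f)$ if $\mathrm{Median}(\mathbb{I}[S(h_1)=0],\dots,\mathbb{I}[S(h_T)=0])=1$, and equal to $2^n$ otherwise. Then $\Pr\left[|S|\le\mathcal{A}(S,h_1,\dots,h_T)\right]\ge1-\Delta$.
   Context: Drawing $h$ from $\mathcal{H}^f_{m\times n}$ means $h(x)=Ax+b\bmod 2$ with $A\in\{0,1\}^{m\times n}$ having i.i.d. entries with $\Pr[A_{ij}=1]=f$ and $b\in\{0,1\}^m$ uniform and independent of $A$; $S(h)=|\{x\in S:h(x)=0\}|$. In the definition of $U$, $z$ ranges over integers $1\le z\le 2^n$ (minimum of the empty set $=+\infty$). For integer $1\le q\le 2^n+1$: $w^*(n,q)=\max\{w\ge0:\sum_{j=1}^w\binom{n}{j}\le q-1\}$, $r(n,q)=q-1-\sum_{w=1}^{w^*(n,q)}\binom{n}{w}$, $$(q-1)\,\epsilon(n,m,q,f)=\sum_{w=1}^{w^*(n,q)}\binom{n}{w}\frac{(1+(1-2f)^w)^m}{2^m}+\frac{r(n,q)}{2^m}(1+(1-2f)^{w^*(n,q)+1})^m,$$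 and $v(q)=\frac{q}{2^m}\left(1+\epsilon(n,m,q,f)(q-1)-\frac{q}{2^m}\right)$. *)

theory Defs
  imports "HOL-Probability.Probability"
begin

text \<open>A hash function h(x) = A x + b mod 2, A an m x n 0/1 matrix (as a function on index
pairs, entries outside the m x n range are False), b a 0/1 vector of length m.
Vectors x in {0,1}^n are boolean lists of length n.\<close>

type_synonym hash = "((nat \<times> nat) \<Rightarrow> bool) \<times> (nat \<Rightarrow> bool)"

definition hash_pmf :: "nat \<Rightarrow> nat \<Rightarrow> real \<Rightarrow> hash pmf" where
  "hash_pmf m n f =
     do { A \<leftarrow> Pi_pmf ({..<m} \<times> {..<n}) False (\<lambda>_. bernoulli_pmf f);
          b \<leftarrow> Pi_pmf {..<m} False (\<lambda>_. bernoulli_pmf (1/2));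
          return_pmf (A, b) }"

text \<open>i-th coordinate of h(x) = A x + b mod 2 (True = 1).\<close>
definition hash_coord :: "nat \<Rightarrow> hash \<Rightarrow> bool list \<Rightarrow> nat \<Rightarrow> bool" where
  "hash_coord n h x i = (snd h i \<noteq> odd (card {j. j < n \<and> fst h (i, j) \<and> x ! j}))"

definition cell_count :: "nat \<Rightarrow> nat \<Rightarrow> bool list set \<Rightarrow> hash \<Rightarrow> nat" where
  "cell_count m n S h = card {x \<in> S. \<forall>i<m. \<not> hash_coord n h x i}"

definition wstar :: "nat \<Rightarrow> nat \<Rightarrow> nat" where
  "wstar n q = (GREATEST w. w \<le> n \<and> (\<Sum>j=1..w. n choose j) \<le> q - 1)"

definition rr :: "nat \<Rightarrow> nat \<Rightarrow> nat" where
  "rr n q = q - 1 - (\<Sum>w=1..wstar n q. n choose w)"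

definition eps :: "nat \<Rightarrow> nat \<Rightarrow> nat \<Rightarrow> real \<Rightarrow> real" where
  "eps n m q f =
     ((\<Sum>w=1..wstar n q. real (n choose w) * (1 + (1 - 2*f)^w)^m / 2^m)
      + real (rr n q) / 2^m * (1 + (1 - 2*f)^(wstar n q + 1))^m) / (real q - 1)"

definition vq :: "nat \<Rightarrow> nat \<Rightarrow> real \<Rightarrow> nat \<Rightarrow> real" where
  "vq n m f q = real q / 2^m * (1 + eps n m q f * (real q - 1) - real q / 2^m)"

definition U_set :: "nat \<Rightarrow> nat \<Rightarrow> real \<Rightarrow> nat set" where
  "U_set n m f = {z. 1 \<le> z \<and> z \<le> 2^n \<and>
       1 / (1 + 2^(2*m) * vq n m f z / (real z)^2) \<ge> 3/4}"

definition U :: "nat \<Rightarrow> nat \<Rightarrow> real \<Rightarrow> enat" where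
  "U n m f = (if U_set n m f = {} then \<infinity> else enat (Min (U_set n m f)))"

text \<open>Median of the 0/1 values I[S(h_t)=0], t < T, equals 1 iff strictly more than half are 1.\<close>
definition median_is_one :: "nat \<Rightarrow> (nat \<Rightarrow> bool) \<Rightarrow> bool" where
  "median_is_one T P = (2 * card {t. t < T \<and> P t} > T)"

definition alg :: "nat \<Rightarrow> nat \<Rightarrow> real \<Rightarrow> nat \<Rightarrow> bool list set \<Rightarrow> (nat \<Rightarrow> hash) \<Rightarrow> enat" where
  "alg n m f T S hs =
     (if median_is_one T (\<lambda>t. cell_count m n S (hs t) = 0) then U n m f else enat (2^n))"

end

theory Submission imports Defs begin

lemma int_bdd:
  fixes f :: "'a \<Rightarrow> real"
  assumes "\<And>x. \<bar>f x\<bar> \<le> B"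
  shows "integrable (measure_pmf p) f"
  by (rule measure_pmf.integrable_const_bound[where B=B]) (auto simp: assms)

lemma exp_prod_signed:
  fixes g :: "'a \<Rightarrow> 'b \<Rightarrow> real"
  assumes fin: "finite K" and bd: "\<And>k v. \<bar>g k v\<bar> \<le> c"
  shows "measure_pmf.expectation (Pi_pmf K d p) (\<lambda>y. \<Prod>k\<in>K. g k (y k))
       = (\<Prod>k\<in>K. measure_pmf.expectation (p k) (g k))"
proof -
  define h where "h k v = g k v + c" for k v
  have hpos: "0 \<le> h k v" for k v using bd[of k v] unfolding h_def by (auto simp: abs_le_iff)
  have hbd: "\<bar>h k v\<bar> \<le> 2*c" for k v using bd[of k v] unfolding h_def by (auto simp: abs_le_iff)
  have c0: "0 \<le> c" using bd[of undefined undefined] by auto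
  have gi: "integrable (measure_pmf q) (g k)" for q k by (rule int_bdd[where B=c]) (rule bd)
  have hi: "integrable (measure_pmf q) (h k)" for q k by (rule int_bdd[where B="2*c"]) (rule hbd)
  have Eh: "measure_pmf.expectation q (h k) = measure_pmf.expectation q (g k) + c" for q k
    unfolding h_def using gi by simp
  have expand: "(\<Prod>k\<in>K. g k (y k)) = (\<Sum>X\<in>Pow K. (-1)^card X * (\<Prod>k\<in>X. c) * (\<Prod>k\<in>K-X. h k (y k)))" for y
  proof -
    have "(\<Prod>k\<in>K. g k (y k)) = (\<Prod>k\<in>K. h k (y k) - c)" by (simp add: h_def)
    also have "\<dots> = (\<Sum>X\<in>Pow K. (-1)^card X * (\<Prod>k\<in>X. c) * (\<Prod>k\<in>K-X. h k (y k)))" by (rule prod_diff_conv_sum[OF fin])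
    finally show ?thesis .
  qed
  have piece: "measure_pmf.expectation (Pi_pmf K d p) (\<lambda>y. \<Prod>k\<in>K-X. h k (y k))
      = (\<Prod>k\<in>K-X. measure_pmf.expectation (p k) (h k))" if X: "X \<subseteq> K" for X
  proof -
    define H where "H = (\<lambda>k v. if k \<in> X then 1 else h k v)"
    have 1: "(\<Prod>k\<in>K-X. h k (y k)) = (\<Prod>k\<in>K. H k (y k))" for y
      unfolding H_def using fin X by (simp add: prod.If_cases Diff_eq)
    have 2: "(\<Prod>k\<in>K-X. measure_pmf.expectation (p k) (h k)) = (\<Prod>k\<in>K. measure_pmf.expectation (p k) (H k))"
    proof -
      have "(\<Prod>k\<in>K. measure_pmf.expectation (p k) (H k)) = (\<Prod>k\<in>K. if k \<in> X then 1 else measure_pmf.expectation (p k) (h k))"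
        by (intro prod.cong refl) (simp add: H_def)
      then show ?thesis using fin X by (simp add: prod.If_cases Diff_eq)
    qed
    have Hbd: "\<bar>H k v\<bar> \<le> 2*c+1" for k v using hbd[of k v] c0 by (auto simp: H_def)
    have HI: "integrable (measure_pmf q) (H k)" for q k by (rule int_bdd[where B="2*c+1"]) (rule Hbd)
    have Hpos: "0 \<le> H k v" for k v by (simp add: H_def hpos)
    have "measure_pmf.expectation (Pi_pmf K d p) (\<lambda>y. \<Prod>k\<in>K. H k (y k)) = (\<Prod>k\<in>K. measure_pmf.expectation (p k) (H k))"
      by (rule expectation_prod_Pi_pmf[OF fin]) (simp_all add: HI Hpos)
    then show ?thesis using 1 2 by simp
  qed
  have "measure_pmf.expectation (Pi_pmf K d p) (\<lambda>y. \<Prod>k\<in>K. g k (y k))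
      = measure_pmf.expectation (Pi_pmf K d p) (\<lambda>y. \<Sum>X\<in>Pow K. (-1)^card X * (\<Prod>k\<in>X. c) * (\<Prod>k\<in>K-X. h k (y k)))"
    by (simp only: expand)
  also have "\<dots> = (\<Sum>X\<in>Pow K. (-1)^card X * (\<Prod>k\<in>X. c) * measure_pmf.expectation (Pi_pmf K d p) (\<lambda>y. \<Prod>k\<in>K-X. h k (y k)))"
  proof -
    have hbd1: "\<bar>h k v\<bar> \<le> 2*c+1" for k v using hbd[of k v] by linarith
    have pb: "\<bar>\<Prod>k\<in>K-X. h k (y k)\<bar> \<le> (2*c+1)^card K" for X y
    proof -
      have "(\<Prod>k\<in>K-X. \<bar>h k (y k)\<bar>) \<le> (\<Prod>k\<in>K-X. 2*c+1)"
        by (intro prod_mono) (simp add: hbd1)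
      also have "\<dots> = (2*c+1)^card (K-X)" by simp
      also have "\<dots> \<le> (2*c+1)^card K"
        by (intro power_increasing card_mono fin) (use c0 in auto)
      finally show ?thesis by (simp add: abs_prod)
    qed
    have pi: "integrable (measure_pmf (Pi_pmf K d p)) (\<lambda>y. \<Prod>k\<in>K-X. h k (y k))" for X
      by (rule int_bdd[where B="(2*c+1)^card K"]) (rule pb)
    show ?thesis
      by (subst Bochner_Integration.integral_sum) (auto intro!: integrable_mult_right pi)
  qed
  also have "\<dots> = (\<Sum>X\<in>Pow K. (-1)^card X * (\<Prod>k\<in>X. c) * (\<Prod>k\<in>K-X. measure_pmf.expectation (p k) (g k) + c))"
    by (intro sum.cong refl) (simp add: piece Eh)
  also have "\<dots> = (\<Prod>k\<in>K. (measure_pmf.expectation (p k) (g k) + c) - c)"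
    by (rule prod_diff_conv_sum[OF fin, symmetric])
  finally show ?thesis by simp
qed


definition sg :: "bool \<Rightarrow> real" where "sg v = (if v then -1 else 1)"
definition cp :: "nat \<Rightarrow> ((nat \<times> nat) \<Rightarrow> bool) \<Rightarrow> bool list \<Rightarrow> nat \<Rightarrow> bool" where
  "cp n A x i = odd (card {j. j < n \<and> A (i,j) \<and> x ! j})"
definition hdist :: "nat \<Rightarrow> bool list \<Rightarrow> bool list \<Rightarrow> nat" where
  "hdist n x y = card {j. j < n \<and> x ! j \<noteq> y ! j}"
definition Zf :: "nat \<Rightarrow> nat \<Rightarrow> bool list \<Rightarrow> hash \<Rightarrow> real" where
  "Zf m n x h = of_bool (\<forall>i<m. \<not> hash_coord n h x i)"
definition PA :: "nat \<Rightarrow> nat \<Rightarrow> real \<Rightarrow> ((nat \<times> nat) \<Rightarrow> bool) pmf" where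
  "PA m n f = Pi_pmf ({..<m} \<times> {..<n}) False (\<lambda>_. bernoulli_pmf f)"
definition PB :: "nat \<Rightarrow> (nat \<Rightarrow> bool) pmf" where
  "PB m = Pi_pmf {..<m} False (\<lambda>_. bernoulli_pmf (1/2))"

lemma hash_pmf_pair: "hash_pmf m n f = pair_pmf (PA m n f) (PB m)"
  by (simp add: hash_pmf_def pair_pmf_def PA_def PB_def)

lemma neg1_card:
  assumes "finite J"
  shows "(-1::real)^card {j\<in>J. P j} = (\<Prod>j\<in>J. if P j then -1 else 1)"
proof -
  have "(\<Prod>j\<in>J. if P j then -1 else 1) = (\<Prod>j\<in>J \<inter> {j. P j}. (-1::real)) * (\<Prod>j\<in>J \<inter> - {j. P j}. 1)"
    by (rule prod.If_cases) fact
  also have "\<dots> = (-1)^card (J \<inter> {j. P j})" by simp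
  also have "J \<inter> {j. P j} = {j\<in>J. P j}" by auto
  finally show ?thesis by simp
qed

lemma par_eq: "(of_bool (odd a = odd b) :: real) = (1 + (-1)^a * (-1)^b)/2"
  by (cases "even a"; cases "even b") simp_all

lemma cp_eq:
  "(of_bool (cp n A x i = cp n A y i) :: real) = (1 + (\<Prod>j\<in>{j. j<n \<and> x!j \<noteq> y!j}. sg (A(i,j))))/2"
proof -
  have a: "(-1::real)^card {j. j<n \<and> A(i,j) \<and> x!j} = (\<Prod>j\<in>{..<n}. if A(i,j) \<and> x!j then -1 else 1)"
    using neg1_card[of "{..<n}" "\<lambda>j. A(i,j) \<and> x!j"] by simp
  have b: "(-1::real)^card {j. j<n \<and> A(i,j) \<and> y!j} = (\<Prod>j\<in>{..<n}. if A(i,j) \<and> y!j then -1 else 1)"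
    using neg1_card[of "{..<n}" "\<lambda>j. A(i,j) \<and> y!j"] by simp
  have c: "(\<Prod>j\<in>{j. j<n \<and> x!j \<noteq> y!j}. sg (A(i,j))) = (\<Prod>j\<in>{..<n}. if x!j \<noteq> y!j then sg (A(i,j)) else 1)"
    using prod.inter_filter[of "{..<n}" "\<lambda>j. sg (A(i,j))" "\<lambda>j. x!j \<noteq> y!j"] by simp
  have d: "(\<Prod>j\<in>{..<n}. if A(i,j) \<and> x!j then -1 else 1) * (\<Prod>j\<in>{..<n}. if A(i,j) \<and> y!j then -1 else 1)
      = (\<Prod>j\<in>{..<n}. if x!j \<noteq> y!j then sg (A(i,j)) else (1::real))"
    by (subst prod.distrib[symmetric]) (intro prod.cong refl, auto simp: sg_def)
  show ?thesis unfolding cp_def par_eq a b c d ..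
qed

lemma of_bool_all: "finite I \<Longrightarrow> (of_bool (\<forall>i\<in>I. P i) :: real) = (\<Prod>i\<in>I. of_bool (P i))"
  by (induction I rule: finite_induct) auto

lemma Zf_single: "Zf m n x (A,b) = (\<Prod>i\<in>{..<m}. of_bool (b i = cp n A x i))"
proof -
  have "(\<forall>i<m. \<not> hash_coord n (A,b) x i) = (\<forall>i\<in>{..<m}. b i = cp n A x i)"
    by (auto simp: hash_coord_def cp_def)
  then show ?thesis unfolding Zf_def using of_bool_all[of "{..<m}" "\<lambda>i. b i = cp n A x i"] by simp
qed

lemma Zf_prod: "Zf m n x (A,b) * Zf m n y (A,b) = (\<Prod>i\<in>{..<m}. of_bool (b i = cp n A x i) * of_bool (b i = cp n A y i))"
  unfolding Zf_single by (simp add: prod.distrib)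

lemma Zf_01: "0 \<le> Zf m n x h" "Zf m n x h \<le> 1" "Zf m n x h * Zf m n x h = Zf m n x h"
  unfolding Zf_def by auto

lemma Eb: "measure_pmf.expectation (PB m) (\<lambda>b. \<Prod>i\<in>{..<m}. of_bool (b i = u i) * of_bool (b i = v i))
    = (\<Prod>i\<in>{..<m}. (of_bool (u i = v i) :: real) / 2)"
  unfolding PB_def
  by (subst expectation_prod_Pi_pmf)
     (auto intro!: prod.cong int_bdd[where B=1] split: if_splits)

lemma exp_pair:
  fixes F :: "'a \<times> 'b \<Rightarrow> real"
  assumes nn: "\<And>z. 0 \<le> F z" and bd: "\<And>z. F z \<le> B"
  shows "measure_pmf.expectation (pair_pmf P Q) F
       = measure_pmf.expectation P (\<lambda>a. measure_pmf.expectation Q (\<lambda>b. F (a,b)))"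
proof -
  have ab: "\<bar>F z\<bar> \<le> B" for z using nn[of z] bd[of z] by simp
  have i1: "integrable (measure_pmf R) (\<lambda>z. F (g z))" for R :: "'c pmf" and g
    by (rule int_bdd[where B=B]) (simp add: ab)
  have inn: "0 \<le> measure_pmf.expectation Q (\<lambda>b. F (a,b))" for a
    by (intro Bochner_Integration.integral_nonneg nn)
  have ibd: "\<bar>measure_pmf.expectation Q (\<lambda>b. F (a,b))\<bar> \<le> B" for a
  proof -
    have "measure_pmf.expectation Q (\<lambda>b. F (a,b)) \<le> measure_pmf.expectation Q (\<lambda>b. B)"
      by (intro Bochner_Integration.integral_mono i1[of _ "\<lambda>b. (a,b)"] bd) simp
    then show ?thesis using inn by simp
  qed
  have "ennreal (measure_pmf.expectation (pair_pmf P Q) F) = (\<integral>\<^sup>+z. ennreal (F z) \<partial>pair_pmf P Q)"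
    by (rule nn_integral_eq_integral[symmetric]) (use i1[of _ "\<lambda>z. z"] nn in auto)
  also have "\<dots> = (\<integral>\<^sup>+a. \<integral>\<^sup>+b. ennreal (F (a,b)) \<partial>Q \<partial>P)" by (rule nn_integral_pair_pmf')
  also have "\<dots> = (\<integral>\<^sup>+a. ennreal (measure_pmf.expectation Q (\<lambda>b. F (a,b))) \<partial>P)"
    by (intro nn_integral_cong nn_integral_eq_integral) (use i1[of _ "\<lambda>b. (_,b)"] nn in auto)
  also have "\<dots> = ennreal (measure_pmf.expectation P (\<lambda>a. measure_pmf.expectation Q (\<lambda>b. F (a,b))))"
    by (intro nn_integral_eq_integral int_bdd[where B=B] ibd) (auto simp: inn)
  finally show ?thesis
    by (subst (asm) ennreal_inj) (auto intro!: Bochner_Integration.integral_nonneg nn inn)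
qed

lemma prod_div_const: "finite I \<Longrightarrow> (\<Prod>i\<in>I. g i / c) = (\<Prod>i\<in>I. (g i::real)) / c^card I"
  by (induction I rule: finite_induct) auto

lemma four_pow: "(4::real)^m = 2^m * 2^m"
  by (simp flip: power_mult_distrib)

lemma prod_half: "finite I \<Longrightarrow> (\<Prod>i\<in>I. g i / 2) = (\<Prod>i\<in>I. (g i::real)) / 2^card I"
  by (induction I rule: finite_induct) auto

lemma bern_sg: "0 \<le> f \<Longrightarrow> f \<le> 1 \<Longrightarrow> measure_pmf.expectation (bernoulli_pmf f) sg = 1 - 2*f"
  by (simp add: sg_def)

lemma abs_sg_if: "\<bar>(if P then sg v else 1)\<bar> = 1"
  by (simp add: sg_def)

lemma Apart:
  assumes D: "D \<subseteq> {..<n}" and f: "0 \<le> f" "f \<le> 1"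
  shows "measure_pmf.expectation (PA m n f) (\<lambda>A. \<Prod>i\<in>{..<m}. (1 + (\<Prod>j\<in>D. sg (A(i,j))))/2)
       = ((1 + (1-2*f)^card D)/2)^m"
proof -
  define KK where "KK = {..<m} \<times> {..<n}"
  have finD: "finite D" using D finite_subset by blast
  define c where "c = (1 - 2*f)^card D"
  have eq1: "(\<Prod>i\<in>{..<m}. (1 + (\<Prod>j\<in>D. sg (A(i,j))))/2)
      = (\<Sum>I\<in>Pow {..<m}. \<Prod>k\<in>KK. (if k \<in> I \<times> D then sg (A k) else 1)) / 2^m" for A
  proof -
    have "(\<Prod>i\<in>{..<m}. (1 + (\<Prod>j\<in>D. sg (A(i,j))))/2) = (\<Prod>i\<in>{..<m}. (\<Prod>j\<in>D. sg (A(i,j))) + 1) / 2^m"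
      by (subst prod_half) (simp_all add: add.commute)
    also have "(\<Prod>i\<in>{..<m}. (\<Prod>j\<in>D. sg (A(i,j))) + 1) = (\<Sum>I\<in>Pow {..<m}. (\<Prod>i\<in>I. \<Prod>j\<in>D. sg (A(i,j))) * (\<Prod>i\<in>{..<m}-I. 1))"
      by (rule prod_add) simp
    also have "\<dots> = (\<Sum>I\<in>Pow {..<m}. \<Prod>k\<in>KK. (if k \<in> I \<times> D then sg (A k) else 1))"
    proof (intro sum.cong refl)
      fix I assume I: "I \<in> Pow {..<m}"
      have "(\<Prod>i\<in>I. \<Prod>j\<in>D. sg (A(i,j))) = (\<Prod>k\<in>I \<times> D. sg (A k))"
        by (subst prod.cartesian_product) (simp add: case_prod_beta)
      also have "\<dots> = (\<Prod>k\<in>KK. (if k \<in> I \<times> D then sg (A k) else 1))"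
      proof -
        have "(\<Prod>k\<in>KK. (if k \<in> I \<times> D then sg (A k) else 1)) = (\<Prod>k\<in>KK \<inter> {k. k \<in> I \<times> D}. sg (A k)) * (\<Prod>k\<in>KK \<inter> - {k. k \<in> I \<times> D}. 1)"
          by (rule prod.If_cases) (simp add: KK_def)
        moreover have "KK \<inter> {k. k \<in> I \<times> D} = I \<times> D" using I D by (auto simp: KK_def)
        ultimately show ?thesis by simp
      qed
      finally show "(\<Prod>i\<in>I. \<Prod>j\<in>D. sg (A(i,j))) * (\<Prod>i\<in>{..<m}-I. 1) = (\<Prod>k\<in>KK. (if k \<in> I \<times> D then sg (A k) else 1))"
        by simp
    qed
    finally show ?thesis by simp
  qed
  have eI: "measure_pmf.expectation (PA m n f) (\<lambda>A. \<Prod>k\<in>KK. (if k \<in> I \<times> D then sg (A k) else 1)) = c ^ card I"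
    if I: "I \<in> Pow {..<m}" for I
  proof -
    have "measure_pmf.expectation (PA m n f) (\<lambda>A. \<Prod>k\<in>KK. (if k \<in> I \<times> D then sg (A k) else 1))
        = (\<Prod>k\<in>KK. measure_pmf.expectation (bernoulli_pmf f) (\<lambda>v. if k \<in> I \<times> D then sg v else 1))"
      unfolding PA_def KK_def[symmetric]
      by (rule exp_prod_signed[where c=1]) (auto simp: KK_def sg_def)
    also have "\<dots> = (\<Prod>k\<in>KK. if k \<in> I \<times> D then 1 - 2*f else 1)"
      by (intro prod.cong refl) (use f in \<open>auto simp: sg_def\<close>)
    also have "\<dots> = (\<Prod>k\<in>KK \<inter> {k. k \<in> I \<times> D}. 1 - 2*f) * (\<Prod>k\<in>KK \<inter> - {k. k \<in> I \<times> D}. 1)"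
      by (rule prod.If_cases) (simp add: KK_def)
    also have "KK \<inter> {k. k \<in> I \<times> D} = I \<times> D" using I D by (auto simp: KK_def)
    finally show ?thesis using card_cartesian_product[of I D] by (simp add: c_def power_mult mult.commute)
  qed
  have "measure_pmf.expectation (PA m n f) (\<lambda>A. \<Prod>i\<in>{..<m}. (1 + (\<Prod>j\<in>D. sg (A(i,j))))/2)
      = (\<Sum>I\<in>Pow {..<m}. measure_pmf.expectation (PA m n f) (\<lambda>A. \<Prod>k\<in>KK. (if k \<in> I \<times> D then sg (A k) else 1))) / 2^m"
    unfolding eq1 integral_divide_zero
    by (subst Bochner_Integration.integral_sum)
       (auto intro!: int_bdd[where B=1] simp: abs_prod abs_sg_if)
  also have "\<dots> = (\<Sum>I\<in>Pow {..<m}. (\<Prod>i\<in>I. c) * (\<Prod>i\<in>{..<m}-I. 1)) / 2^m"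
    by (intro arg_cong2[where f="(/)"] sum.cong refl) (simp add: eI)
  also have "(\<Sum>I\<in>Pow {..<m}. (\<Prod>i\<in>I. c) * (\<Prod>i\<in>{..<m}-I. 1)) = (\<Prod>i\<in>{..<m}. c + 1)"
    by (rule prod_add[symmetric]) simp
  finally show ?thesis by (simp add: c_def power_divide add.commute)
qed

lemma EZZ:
  assumes f: "0 \<le> f" "f \<le> 1"
  shows "measure_pmf.expectation (hash_pmf m n f) (\<lambda>h. Zf m n x h * Zf m n y h)
       = (1/2)^m * ((1 + (1-2*f)^hdist n x y)/2)^m"
proof -
  define D where "D = {j. j<n \<and> x!j \<noteq> y!j}"
  have Dsub: "D \<subseteq> {..<n}" by (auto simp: D_def)
  have "measure_pmf.expectation (hash_pmf m n f) (\<lambda>h. Zf m n x h * Zf m n y h)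
      = measure_pmf.expectation (PA m n f) (\<lambda>A. measure_pmf.expectation (PB m) (\<lambda>b. Zf m n x (A,b) * Zf m n y (A,b)))"
    unfolding hash_pmf_pair
    by (rule exp_pair[where B=1]) (auto simp: Zf_01 intro: mult_le_one)
  also have "\<dots> = measure_pmf.expectation (PA m n f) (\<lambda>A. (1/2)^m * (\<Prod>i\<in>{..<m}. (1 + (\<Prod>j\<in>D. sg (A(i,j))))/2))"
    unfolding Zf_prod Eb
    by (intro Bochner_Integration.integral_cong refl)
       (simp add: prod_div_const cp_eq D_def power_one_over four_pow)
  also have "\<dots> = (1/2)^m * ((1 + (1-2*f)^card D)/2)^m"
    by (simp add: Apart[OF Dsub f])
  finally show ?thesis by (simp add: D_def hdist_def)
qed


lemma quad:
  fixes a b p :: real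
  assumes p: "p \<ge> 0" and H: "\<And>t. 0 \<le> a - 2*t*b + t^2*p"
  shows "b^2 \<le> a*p"
proof (cases "p = 0")
  case True
  have "b = 0"
  proof (rule ccontr)
    assume b: "b \<noteq> 0"
    have "0 \<le> a - 2*((\<bar>a\<bar>+1)/b)*b + ((\<bar>a\<bar>+1)/b)^2*p" by (rule H)
    also have "\<dots> = a - 2*(\<bar>a\<bar>+1)" using b True by simp
    finally show False by (cases "a \<ge> 0") auto
  qed
  then show ?thesis using True by simp
next
  case False
  then have pp: "p > 0" using p by simp
  have "0 \<le> a - 2*(b/p)*b + (b/p)^2*p" by (rule H)
  also have "\<dots> = a - b^2/p" using pp by (simp add: power2_eq_square field_simps)
  finally have "b^2/p \<le> a" by simp
  then show ?thesis using pp by (simp add: pos_divide_le_eq)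
qed

lemma exp_of_bool: "measure_pmf.expectation P (\<lambda>z. of_bool (Q z) :: real) = measure_pmf.prob P {z. Q z}"
proof -
  have "(\<lambda>z. of_bool (Q z) :: real) = indicator {z. Q z}" by (auto simp: indicator_def)
  then show ?thesis by simp
qed

lemma PZ:
  fixes X :: "'a \<Rightarrow> real"
  assumes nn: "\<And>z. 0 \<le> X z" and bd: "\<And>z. X z \<le> B"
  shows "(measure_pmf.expectation P X)^2 \<le> measure_pmf.expectation P (\<lambda>z. X z ^ 2) * measure_pmf.prob P {z. X z \<noteq> 0}"
proof -
  define Y where "Y z = (of_bool (X z \<noteq> 0) :: real)" for z
  have iX: "integrable (measure_pmf P) X" by (rule int_bdd[where B=B]) (use nn bd in \<open>simp add: abs_le_iff\<close>)
  have iX2: "integrable (measure_pmf P) (\<lambda>z. X z ^ 2)"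
  proof (rule int_bdd[where B="B^2"])
    fix z show "\<bar>X z ^ 2\<bar> \<le> B^2" using nn[of z] bd[of z] by (simp add: power_mono)
  qed
  have iY: "integrable (measure_pmf P) Y" by (rule int_bdd[where B=1]) (simp add: Y_def)
  have EY: "measure_pmf.expectation P Y = measure_pmf.prob P {z. X z \<noteq> 0}"
    unfolding Y_def by (rule exp_of_bool)
  have "0 \<le> measure_pmf.expectation P (\<lambda>z. X z ^ 2) - 2*t*measure_pmf.expectation P X + t^2*measure_pmf.expectation P Y" for t
  proof -
    have pw: "(X z - t * Y z)^2 = X z ^ 2 - 2*t*X z + t^2 * Y z" for z
      by (cases "X z = 0") (simp_all add: Y_def power2_eq_square algebra_simps)
    have "0 \<le> measure_pmf.expectation P (\<lambda>z. (X z - t * Y z)^2)"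
      by (intro Bochner_Integration.integral_nonneg) simp
    also have "\<dots> = measure_pmf.expectation P (\<lambda>z. X z ^ 2 - 2*t*X z + t^2 * Y z)"
      by (simp only: pw)
    also have "\<dots> = measure_pmf.expectation P (\<lambda>z. X z ^ 2) - 2*t*measure_pmf.expectation P X + t^2*measure_pmf.expectation P Y"
      using iX iX2 iY by simp
    finally show ?thesis .
  qed
  then show ?thesis unfolding EY[symmetric]
    by (intro quad) (auto simp: Y_def intro!: Bochner_Integration.integral_nonneg)
qed

lemma greedy:
  fixes a c G :: "nat \<Rightarrow> real"
  assumes k: "k \<le> n" and ca: "\<And>w. c w \<le> a w" and G: "\<And>v w. v \<le> w \<Longrightarrow> G w \<le> G v"
    and c0: "\<And>w. 0 \<le> c w"
  shows "(\<Sum>w=1..n. c w * G w) \<le> (\<Sum>w=1..k. a w * G w) + ((\<Sum>w=1..n. c w) - (\<Sum>w=1..k. a w)) * G (k+1)"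
proof -
  have split: "(\<Sum>w=1..n. h w) = (\<Sum>w=1..k. h w) + (\<Sum>w=k+1..n. h w)" for h :: "nat \<Rightarrow> real"
  proof -
    have eq: "{1..n} = {1..k} \<union> {k+1..n}" using k by auto
    have "(\<Sum>w\<in>{1..k} \<union> {k+1..n}. h w) = (\<Sum>w=1..k. h w) + (\<Sum>w=k+1..n. h w)"
      by (rule sum.union_disjoint) auto
    then show ?thesis using eq by simp
  qed
  have tail: "(\<Sum>w=k+1..n. c w * G w) \<le> (\<Sum>w=k+1..n. c w) * G (k+1)"
    unfolding sum_distrib_right by (intro sum_mono mult_left_mono G c0) auto
  have "(\<Sum>w=1..k. a w * G w) - (\<Sum>w=1..k. a w) * G(k+1) - ((\<Sum>w=1..k. c w * G w) - (\<Sum>w=1..k. c w) * G(k+1))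
      = (\<Sum>w=1..k. (a w - c w) * (G w - G (k+1)))"
  proof -
    have pw: "(a w - c w) * (G w - G (k+1)) = (a w * G w - c w * G w) - (a w * G (k+1) - c w * G (k+1))" for w
      by (simp add: algebra_simps)
    show ?thesis by (simp only: pw sum_subtractf sum_distrib_right[symmetric])
  qed
  also have "\<dots> \<ge> 0"
    by (intro sum_nonneg mult_nonneg_nonneg) (auto simp: ca G)
  finally have head: "(\<Sum>w=1..k. c w * G w) - (\<Sum>w=1..k. c w) * G(k+1) \<le> (\<Sum>w=1..k. a w * G w) - (\<Sum>w=1..k. a w) * G(k+1)"
    by simp
  have dd: "((\<Sum>w=1..n. c w) - (\<Sum>w=1..k. a w)) * G (k+1) = (\<Sum>w=1..k. c w) * G (k+1) + (\<Sum>w=k+1..n. c w) * G (k+1) - (\<Sum>w=1..k. a w) * G (k+1)"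
    using split[of c] by (simp add: algebra_simps)
  show ?thesis using split[of "\<lambda>w. c w * G w"] tail head dd by linarith
qed

lemma finite_len: "finite {x :: bool list. length x = n}"
  using finite_lists_length_eq[of "UNIV :: bool set" n] by simp

lemma card_len: "card {x :: bool list. length x = n} = 2^n"
  using card_lists_length_eq[of "UNIV :: bool set" n] by simp

lemma wstar_prop: "wstar n q \<le> n \<and> (\<Sum>j=1..wstar n q. n choose j) \<le> q - 1"
  unfolding wstar_def by (rule GreatestI_nat[where k=0 and b=n]) auto

lemma hdist_le: "hdist n x y \<le> n"
  unfolding hdist_def using card_mono[of "{..<n}" "{j. j < n \<and> x ! j \<noteq> y ! j}"] by auto

lemma hdist_pos:
  assumes "length x = n" "length y = n" "x \<noteq> y" shows "1 \<le> hdist n x y"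
proof -
  have "\<exists>j<n. x!j \<noteq> y!j"
  proof (rule ccontr)
    assume "\<not> (\<exists>j<n. x!j \<noteq> y!j)"
    then have "x = y" using assms by (auto intro: nth_equalityI)
    then show False using assms by simp
  qed
  then obtain j where "j < n" "x!j \<noteq> y!j" by blast
  then have "{j. j < n \<and> x ! j \<noteq> y ! j} \<noteq> {}" by auto
  then show ?thesis unfolding hdist_def by (simp add: Suc_le_eq card_gt_0_iff)
qed

lemma hdist_count:
  assumes Y: "Y \<subseteq> {y. length y = n}" and x: "length x = n"
  shows "card {y\<in>Y. hdist n x y = w} \<le> n choose w"
proof -
  define g where "g y = {j. j < n \<and> x ! j \<noteq> y ! j}" for y
  have "inj_on g {y\<in>Y. hdist n x y = w}"
  proof (rule inj_onI)
    fix y1 y2 assume a: "y1 \<in> {y\<in>Y. hdist n x y = w}" "y2 \<in> {y\<in>Y. hdist n x y = w}" "g y1 = g y2"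
    have l: "length y1 = n" "length y2 = n" using a Y by auto
    show "y1 = y2"
    proof (rule nth_equalityI)
      show "length y1 = length y2" using l by simp
      fix j assume "j < length y1"
      then have j: "j < n" using l by simp
      have "(j \<in> g y1) = (j \<in> g y2)" using a(3) by simp
      then show "y1 ! j = y2 ! j" using j unfolding g_def by auto
    qed
  qed
  moreover have "g ` {y\<in>Y. hdist n x y = w} \<subseteq> {B. B \<subseteq> {..<n} \<and> card B = w}"
    by (auto simp: g_def hdist_def)
  ultimately have "card {y\<in>Y. hdist n x y = w} \<le> card {B. B \<subseteq> {..<n} \<and> card B = w}"
    by (intro card_inj_on_le) (auto simp: finite_Collect_subsets)
  also have "\<dots> = n choose w" by (subst n_subsets) auto
  finally show ?thesis .
qed

lemma eps_nonneg_prod: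
  assumes f: "0 \<le> f" "f \<le> 1/2"
  shows "0 \<le> eps n m q f * (real q - 1)"
proof (cases "real q - 1 = 0")
  case False
  have hh: "0 \<le> 1 + (1 - 2*f)^w" for w using f by simp
  have "eps n m q f * (real q - 1) = (\<Sum>w=1..wstar n q. real (n choose w) * (1 + (1 - 2*f)^w)^m / 2^m)
      + real (rr n q) / 2^m * (1 + (1 - 2*f)^(wstar n q + 1))^m"
    using False unfolding eps_def by simp
  also have "\<dots> \<ge> 0"
    by (intro add_nonneg_nonneg sum_nonneg mult_nonneg_nonneg divide_nonneg_nonneg zero_le_power hh) auto
  finally show ?thesis .
qed simp

lemma rowsum:
  assumes S': "S' \<subseteq> {x. length x = n}" "card S' = q" "x \<in> S'" and f: "0 \<le> f" "f \<le> 1/2"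
  shows "(\<Sum>y\<in>S'-{x}. (1 + (1-2*f)^hdist n x y)^m) \<le> 2^m * (eps n m q f * (real q - 1))"
proof (cases "q = 1")
  case True
  then have "S' = {x}" proof -
    obtain z where "S' = {z}" using S'(2) True card_1_singletonE by blast
    then show ?thesis using S'(3) by simp
  qed
  then show ?thesis using True by simp
next
  case False
  have finS: "finite S'" using S'(1) finite_len finite_subset by blast
  have q2: "q \<ge> 2" proof -
    have "card S' > 0" using finS S'(3) card_gt_0_iff by blast
    then show ?thesis using False S'(2) by linarith
  qed
  define G where "G w = (1 + (1-2*f)^w)^m" for w
  define k where "k = wstar n q"
  have kp: "k \<le> n" "(\<Sum>j=1..k. n choose j) \<le> q - 1" using wstar_prop[of n q] by (auto simp: k_def)
  define Y where "Y = S' - {x}"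
  have finY: "finite Y" using finS by (simp add: Y_def)
  have cardY: "card Y = q - 1" using S' finS by (simp add: Y_def)
  have xl: "length x = n" using S' by auto
  have YS: "Y \<subseteq> {y. length y = n}" using S' by (auto simp: Y_def)
  define c where "c w = real (card {y\<in>Y. hdist n x y = w})" for w
  have "hdist n x y \<in> {1..n}" if "y \<in> Y" for y
    using that YS xl hdist_le[of n x y] hdist_pos[of x n y] by (auto simp: Y_def)
  then have img: "(\<lambda>y. hdist n x y) ` Y \<subseteq> {1..n}" by blast
  have sumG: "(\<Sum>y\<in>Y. G (hdist n x y)) = (\<Sum>w=1..n. c w * G w)"
  proof -
    have "(\<Sum>y\<in>Y. G (hdist n x y)) = (\<Sum>w\<in>{1..n}. \<Sum>y\<in>{y. y \<in> Y \<and> hdist n x y = w}. G (hdist n x y))"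
      by (rule sum.group[symmetric]) (use finY img in auto)
    also have "\<dots> = (\<Sum>w=1..n. c w * G w)"
      by (intro sum.cong refl) (simp add: c_def)
    finally show ?thesis .
  qed
  have sumc: "(\<Sum>w=1..n. c w) = real (q - 1)"
  proof -
    have "(\<Sum>w\<in>{1..n}. \<Sum>y\<in>{y. y \<in> Y \<and> hdist n x y = w}. (1::real)) = (\<Sum>y\<in>Y. 1)"
      by (rule sum.group) (use finY img in auto)
    then show ?thesis by (simp add: c_def cardY)
  qed
  have Gmono: "G w \<le> G v" if "v \<le> w" for v w
  proof -
    have "(1-2*f)^w \<le> (1-2*f)^v" using f that by (intro power_decreasing) auto
    then show ?thesis unfolding G_def using f by (intro power_mono) auto
  qed
  have "(\<Sum>y\<in>Y. G (hdist n x y)) \<le> (\<Sum>w=1..k. real (n choose w) * G w) + (real (q - 1) - (\<Sum>w=1..k. real (n choose w))) * G (k+1)"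
    unfolding sumG sumc[symmetric]
    by (rule greedy[OF kp(1)]) (auto simp: c_def Gmono hdist_count[OF YS xl])
  also have "real (q - 1) - (\<Sum>w=1..k. real (n choose w)) = real (rr n q)"
    using kp(2) by (simp add: rr_def k_def of_nat_diff flip: of_nat_sum)
  also have "(\<Sum>w=1..k. real (n choose w) * G w) + real (rr n q) * G (k+1) = 2^m * (eps n m q f * (real q - 1))"
  proof -
    have ne: "real q - 1 \<noteq> 0" using q2 by simp
    have "eps n m q f * (real q - 1) = (\<Sum>w=1..k. real (n choose w) * G w / 2^m) + real (rr n q) / 2^m * G (k+1)"
      using ne unfolding eps_def G_def k_def by simp
    moreover have "2^m * (\<Sum>w=1..k. real (n choose w) * G w / 2^m) = (\<Sum>w=1..k. real (n choose w) * G w)"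
      by (simp add: sum_distrib_left)
    moreover have "2^m * (real (rr n q) / 2^m * G (k+1)) = real (rr n q) * G (k+1)" by simp
    ultimately show ?thesis by (simp add: distrib_left)
  qed
  finally show ?thesis by (simp add: Y_def G_def)
qed


lemma key:
  assumes S': "S' \<subseteq> {x. length x = n}" "card S' = q" "1 \<le> q" and f: "0 \<le> f" "f \<le> 1/2"
  shows "real q / 2^m \<le> (1 + eps n m q f * (real q - 1)) * measure_pmf.prob (hash_pmf m n f) {h. cell_count m n S' h \<noteq> 0}"
proof -
  define H where "H = hash_pmf m n f"
  define E' where "E' = eps n m q f * (real q - 1)"
  define P where "P = measure_pmf.prob H {h. cell_count m n S' h \<noteq> 0}"
  have f1: "f \<le> 1" using f by simp
  have finS: "finite S'" using S'(1) finite_len finite_subset by blast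
  define X where "X h = (\<Sum>x\<in>S'. Zf m n x h)" for h
  have Xcc: "X h = real (cell_count m n S' h)" for h
    unfolding X_def Zf_def cell_count_def using finS by (simp add: Int_def)
  have nn: "0 \<le> X h" for h unfolding X_def by (intro sum_nonneg) (simp add: Zf_01)
  have bd: "X h \<le> real q" for h
  proof -
    have "X h \<le> (\<Sum>x\<in>S'. 1)" unfolding X_def by (intro sum_mono) (simp add: Zf_01)
    then show ?thesis using S'(2) by simp
  qed
  have iZ: "integrable (measure_pmf H) (Zf m n x)" for x
    by (rule int_bdd[where B=1]) (simp add: Zf_def)
  have iZZ: "integrable (measure_pmf H) (\<lambda>h. Zf m n x h * Zf m n y h)" for x y
    by (rule int_bdd[where B=1]) (simp add: Zf_def)
  have EZ: "measure_pmf.expectation H (Zf m n x) = (1/2)^m" for x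
  proof -
    have "measure_pmf.expectation H (Zf m n x) = measure_pmf.expectation H (\<lambda>h. Zf m n x h * Zf m n x h)"
      by (simp add: Zf_01)
    also have "\<dots> = (1/2)^m" unfolding H_def EZZ[OF f(1) f1] by (simp add: hdist_def)
    finally show ?thesis .
  qed
  have EX: "measure_pmf.expectation H X = real q * (1/2)^m"
    unfolding X_def using S'(2) by (simp add: Bochner_Integration.integral_sum iZ EZ)
  have E'0: "0 \<le> E'" unfolding E'_def by (rule eps_nonneg_prod[OF f])
  have inner: "(\<Sum>y\<in>S'. ((1 + (1-2*f)^hdist n x y)/2)^m) \<le> 1 + E'" if x: "x \<in> S'" for x
  proof -
    have e: "(\<Sum>y\<in>S'. ((1 + (1-2*f)^hdist n x y)/2)^m) = (\<Sum>y\<in>S'. (1 + (1-2*f)^hdist n x y)^m) / 2^m"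
      by (simp add: power_divide sum_divide_distrib)
    have "(\<Sum>y\<in>S'. (1 + (1-2*f)^hdist n x y)^m) = 2^m + (\<Sum>y\<in>S'-{x}. (1 + (1-2*f)^hdist n x y)^m)"
      using sum.remove[OF finS x, of "\<lambda>y. (1 + (1-2*f)^hdist n x y)^m"] by (simp add: hdist_def)
    also have "\<dots> \<le> 2^m + 2^m * E'"
      using rowsum[OF S'(1,2) x f] unfolding E'_def by simp
    finally have B: "(\<Sum>y\<in>S'. (1 + (1-2*f)^hdist n x y)^m) \<le> (1 + E') * 2^m" by (simp add: algebra_simps)
    show ?thesis unfolding e using B by (simp add: pos_divide_le_eq)
  qed
  have "measure_pmf.expectation H (\<lambda>h. X h ^ 2) = (\<Sum>x\<in>S'. \<Sum>y\<in>S'. measure_pmf.expectation H (\<lambda>h. Zf m n x h * Zf m n y h))"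
    unfolding X_def power2_eq_square sum_product
    by (simp add: Bochner_Integration.integral_sum iZZ Bochner_Integration.integrable_sum)
  also have "\<dots> = (\<Sum>x\<in>S'. (1/2)^m * (\<Sum>y\<in>S'. ((1 + (1-2*f)^hdist n x y)/2)^m))"
    unfolding H_def EZZ[OF f(1) f1] by (simp add: sum_distrib_left)
  also have "\<dots> \<le> (\<Sum>x\<in>S'. (1/2)^m * (1 + E'))"
    by (intro sum_mono mult_left_mono inner) auto
  also have "\<dots> = real q * (1/2)^m * (1 + E')" using S'(2) by simp
  finally have EX2: "measure_pmf.expectation H (\<lambda>h. X h ^ 2) \<le> real q * (1/2)^m * (1 + E')" .
  have PX: "measure_pmf.prob H {z. X z \<noteq> 0} = P" unfolding P_def Xcc by simp
  have P0: "0 \<le> P" unfolding P_def by simp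
  have "(real q * (1/2)^m)^2 \<le> measure_pmf.expectation H (\<lambda>h. X h ^ 2) * P"
    using PZ[of X "real q" H, OF nn bd] unfolding EX PX .
  also have "\<dots> \<le> real q * (1/2)^m * (1 + E') * P" by (intro mult_right_mono EX2 P0)
  finally have "(real q * (1/2)^m) * (real q * (1/2)^m) \<le> (real q * (1/2)^m) * ((1 + E') * P)"
    by (simp add: power2_eq_square mult.assoc)
  moreover have "0 < real q * (1/2)^m" using S'(3) by simp
  ultimately have "real q * (1/2)^m \<le> (1 + E') * P" using mult_le_cancel_left_pos by blast
  then show ?thesis by (simp add: H_def E'_def P_def power_one_over)
qed

lemma alg34:
  fixes u :: nat and E P :: real
  assumes u: "1 \<le> u" and E: "0 \<le> E" and up: "real u / 2^m \<le> (1+E)*P"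
    and cond: "1/(1 + 2^(2*m) * vq n m f u / (real u)^2) \<ge> 3/4"
    and Ed: "eps n m u f * (real u - 1) = E"
  shows "P \<ge> 3/4"
proof -
  define a where "a = real u / 2^m"
  have a0: "a > 0" using u by (simp add: a_def)
  have ua: "real u = a * 2^m" by (simp add: a_def)
  have vq: "vq n m f u = a * (1 + E - a)" by (simp add: vq_def a_def Ed)
  have p2: "(2::real)^(2*m) = 2^m * 2^m" by (simp add: power_mult mult.commute power2_eq_square)
  have "1 + 2^(2*m) * vq n m f u / (real u)^2 = (1 + E)/a"
    unfolding vq p2 ua using a0 by (simp add: power2_eq_square field_simps)
  then have "3/4 \<le> a/(1+E)" using cond by simp
  also have "a/(1+E) \<le> P" using up E by (simp add: a_def pos_divide_le_eq mult.commute)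
  finally show ?thesis .
qed

lemma median_bound:
  fixes H :: "'a pmf" and Q :: "'a \<Rightarrow> bool"
  assumes p: "measure_pmf.prob H {h. Q h} \<le> 1/4" and D: "0 < \<Delta>" "\<Delta> < 1"
    and T: "real T \<ge> 24 * ln (1/\<Delta>)"
  shows "measure_pmf.prob (Pi_pmf {..<T} d (\<lambda>_. H)) {hs. median_is_one T (\<lambda>t. Q (hs t))} \<le> \<Delta>"
proof -
  define PP where "PP = Pi_pmf {..<T} d (\<lambda>_. H)"
  define X where "X = (\<lambda>(t::nat) (hs::nat \<Rightarrow> 'a). (of_bool (Q (hs t)) :: real))"
  define \<mu> where "\<mu> = (\<Sum>t\<in>{..<T}. measure_pmf.expectation PP (X t))"
  have lnpos: "ln (1/\<Delta>) > 0" using D by simp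
  have Tpos: "real T > 0" using T lnpos by linarith
  have EX: "measure_pmf.expectation PP (X t) = measure_pmf.prob H {h. Q h}" if "t < T" for t
  proof -
    have "measure_pmf.expectation PP (X t) = measure_pmf.expectation (map_pmf (\<lambda>hs. hs t) PP) (\<lambda>h. of_bool (Q h))"
      by (simp add: X_def)
    also have "map_pmf (\<lambda>hs. hs t) PP = H" using that by (simp add: PP_def Pi_pmf_component)
    finally show ?thesis by (simp add: exp_of_bool)
  qed
  have \<mu>le: "\<mu> \<le> real T / 4"
  proof -
    have "\<mu> = real T * measure_pmf.prob H {h. Q h}" unfolding \<mu>_def by (simp add: EX)
    then show ?thesis using p Tpos by simp
  qed
  have indep: "prob_space.indep_vars (measure_pmf PP) (\<lambda>_. borel) X {..<T}"
    using prob_space.indep_vars_compose2[OF measure_pmf.prob_space_axioms indep_vars_Pi_pmf[of "{..<T}" d "\<lambda>_. H"],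
        of "\<lambda>_ h. of_bool (Q h) :: real" "\<lambda>_. borel"]
    by (simp add: X_def PP_def)
  interpret Hoeffding_ineq "measure_pmf PP" "{..<T}" X "\<lambda>_. 0" "\<lambda>_. 1" \<mu>
  proof unfold_locales
    show "prob_space.indep_vars (measure_pmf PP) (\<lambda>_. borel) X {..<T}" by (rule indep)
  qed (auto simp: \<mu>_def X_def)
  have hb: "measure_pmf.prob PP {x\<in>space (measure_pmf PP). (\<Sum>i\<in>{..<T}. X i x) \<ge> \<mu> + real T / 4}
      \<le> exp (-2 * (real T / 4)\<^sup>2 / (\<Sum>i\<in>{..<T}. (1 - 0)\<^sup>2))"
    using Hoeffding_ineq_ge[of "real T / 4"] Tpos by simp
  have ex: "exp (-2 * (real T / 4)\<^sup>2 / (\<Sum>i\<in>{..<T}. (1 - 0)\<^sup>2)) = exp (- (real T / 8))"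
    using Tpos by (simp add: power2_eq_square)
  have "exp (- (real T / 8)) \<le> exp (ln \<Delta>)"
  proof -
    have "ln \<Delta> = - ln (1/\<Delta>)" using D by (simp add: ln_div)
    then show ?thesis using T lnpos by simp
  qed
  also have "exp (ln \<Delta>) = \<Delta>" using D by simp
  finally have exd: "exp (- (real T / 8)) \<le> \<Delta>" .
  have sub: "{hs. median_is_one T (\<lambda>t. Q (hs t))} \<subseteq> {x\<in>space (measure_pmf PP). (\<Sum>i\<in>{..<T}. X i x) \<ge> \<mu> + real T / 4}"
  proof
    fix hs assume "hs \<in> {hs. median_is_one T (\<lambda>t. Q (hs t))}"
    then have c: "2 * card {t. t < T \<and> Q (hs t)} > T" by (simp add: median_is_one_def)
    have "(\<Sum>i\<in>{..<T}. X i hs) = real (card {t. t < T \<and> Q (hs t)})"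
      by (simp add: X_def Int_def)
    moreover have "real (card {t. t < T \<and> Q (hs t)}) > real T / 2" using c by linarith
    ultimately show "hs \<in> {x\<in>space (measure_pmf PP). (\<Sum>i\<in>{..<T}. X i x) \<ge> \<mu> + real T / 4}"
      using \<mu>le by simp
  qed
  have "measure_pmf.prob PP {hs. median_is_one T (\<lambda>t. Q (hs t))}
      \<le> measure_pmf.prob PP {x\<in>space (measure_pmf PP). (\<Sum>i\<in>{..<T}. X i x) \<ge> \<mu> + real T / 4}"
    by (rule measure_pmf.finite_measure_mono[OF sub]) simp
  also have "\<dots> \<le> \<Delta>" using hb ex exd by linarith
  finally show ?thesis unfolding PP_def .
qed


theorem theorem4:
  fixes S :: "bool list set" and n m T :: nat and f \<Delta> :: real
  assumes "S \<subseteq> {x. length x = n}"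
    and "1 \<le> m" and "m \<le> n"
    and "0 \<le> f" and "f \<le> 1/2"
    and "0 < \<Delta>" and "\<Delta> < 1"
    and "real T \<ge> 24 * ln (1/\<Delta>)"
  shows "measure_pmf.prob (Pi_pmf {..<T} (\<lambda>_. False, \<lambda>_. False) (\<lambda>_. hash_pmf m n f))
           {hs. enat (card S) \<le> alg n m f T S hs} \<ge> 1 - \<Delta>"
proof -
  note S = assms(1) and f = assms(4,5) and D = assms(6,7) and TT = assms(8)
  define PP where "PP = Pi_pmf {..<T} (\<lambda>_. False, \<lambda>_. False) (\<lambda>_. hash_pmf m n f)"
  have finS: "finite S" using S finite_len finite_subset by blast
  have cardS: "card S \<le> 2^n" using card_mono[OF finite_len S] card_len[of n] by simp
  have "measure_pmf.prob PP {hs. enat (card S) \<le> alg n m f T S hs} \<ge> 1 - \<Delta>"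
  proof (cases "\<exists>u. U n m f = enat u \<and> u < card S")
    case False
    have "enat (card S) \<le> U n m f" using False by (cases "U n m f") auto
    then have "{hs. enat (card S) \<le> alg n m f T S hs} = UNIV" using cardS by (auto simp: alg_def)
    then show ?thesis using D by simp
  next
    case True
    then obtain u where u: "U n m f = enat u" "u < card S" by blast
    have ne: "U_set n m f \<noteq> {}" and uM: "u = Min (U_set n m f)" using u(1) by (auto simp: U_def split: if_splits)
    have finU: "finite (U_set n m f)" by (rule finite_subset[of _ "{1..2^n}"]) (auto simp: U_set_def)
    have uin: "u \<in> U_set n m f" using Min_in[OF finU ne] uM by simp
    then have u1: "1 \<le> u" and cond: "1/(1 + 2^(2*m) * vq n m f u / (real u)^2) \<ge> 3/4"
      by (auto simp: U_set_def)
    obtain S'' where S'': "S'' \<subseteq> S" "card S'' = u" "finite S''"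
      using obtain_subset_with_card_n[of u S] u(2) by auto
    have S''l: "S'' \<subseteq> {x. length x = n}" using S''(1) S by auto
    define E where "E = eps n m u f * (real u - 1)"
    define Pn where "Pn = measure_pmf.prob (hash_pmf m n f) {h. cell_count m n S'' h \<noteq> 0}"
    have k: "real u / 2^m \<le> (1 + E) * Pn"
      unfolding E_def Pn_def by (rule key[OF S''l S''(2) u1 f])
    have E0: "0 \<le> E" unfolding E_def by (rule eps_nonneg_prod[OF f])
    have Pn: "Pn \<ge> 3/4" by (rule alg34[OF u1 E0 k cond]) (simp add: E_def)
    have mono: "{h. cell_count m n S h = 0} \<subseteq> {h. cell_count m n S'' h = 0}"
    proof
      fix h assume "h \<in> {h. cell_count m n S h = 0}"
      then have "{x \<in> S. \<forall>i<m. \<not> hash_coord n h x i} = {}" using finS by (simp add: cell_count_def)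
      then have e: "{x \<in> S''. \<forall>i<m. \<not> hash_coord n h x i} = {}" using S''(1) by blast
      have "cell_count m n S'' h = 0" unfolding cell_count_def e by simp
      then show "h \<in> {h. cell_count m n S'' h = 0}" by simp
    qed
    have "measure_pmf.prob (hash_pmf m n f) {h. cell_count m n S h = 0}
        \<le> measure_pmf.prob (hash_pmf m n f) {h. cell_count m n S'' h = 0}"
      by (rule measure_pmf.finite_measure_mono[OF mono]) simp
    also have "{h. cell_count m n S'' h = 0} = UNIV - {h. cell_count m n S'' h \<noteq> 0}" by auto
    also have "measure_pmf.prob (hash_pmf m n f) \<dots> = 1 - Pn"
      unfolding Pn_def by (subst measure_pmf.prob_compl[symmetric]) auto
    finally have p: "measure_pmf.prob (hash_pmf m n f) {h. cell_count m n S h = 0} \<le> 1/4" using Pn by simp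
    have bad: "measure_pmf.prob PP {hs. median_is_one T (\<lambda>t. cell_count m n S (hs t) = 0)} \<le> \<Delta>"
      unfolding PP_def by (rule median_bound[OF p D TT])
    have sub: "UNIV - {hs. median_is_one T (\<lambda>t. cell_count m n S (hs t) = 0)} \<subseteq> {hs. enat (card S) \<le> alg n m f T S hs}"
      using cardS by (auto simp: alg_def)
    have "1 - \<Delta> \<le> 1 - measure_pmf.prob PP {hs. median_is_one T (\<lambda>t. cell_count m n S (hs t) = 0)}"
      using bad by simp
    also have "\<dots> = measure_pmf.prob PP (UNIV - {hs. median_is_one T (\<lambda>t. cell_count m n S (hs t) = 0)})"
      by (subst measure_pmf.prob_compl[symmetric]) auto
    also have "\<dots> \<le> measure_pmf.prob PP {hs. enat (card S) \<le> alg n m f T S hs}"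
      by (rule measure_pmf.finite_measure_mono[OF sub]) simp
    finally show ?thesis .
  qed
  then show ?thesis by (simp add: PP_def)
qed

end
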